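(* Let $R>0$, let $E\subset\mathbb{R}^d$ be an $R$-supported body and $A=co_R(E)$. Then: (i) $\partial E\subset\partial A$; (ii) $\operatorname{int}(E)\subset\operatorname{int}(A)$; (iii) $\mathcal{N}_R(E,a)=\mathcal{N}_R(A,a)$ for every $a\in\partial E$; (iv) $co_R(E)=E_R\cap\bigcap\{\mathbb{R}^d\setminus B(a+R\theta): a\in\partial E,\ \theta\in\mathcal{N}_R(E,a)\}$.
   Context: A body is a nonempty closed subset of $\mathbb{R}^d$. Fix $R>0$; $B(x)=\{y:|y-x|<R\}$; $S^{d-1}$ is the unit sphere. For a body $E$, $E_R=\{x:\operatorname{dist}(x,E)<R\}$. The $R$-hulloid is $co_R(E)=\bigcap\{\mathbb{R}^d\setminus B : B \text{ an open ball of radius } R,\ B\cap E=\emptyset\}$ (equal to $\mathbb{R}^d$ if no such ball exists). For a body $A$ and $a\in\partial A$, $\mathcal{N}_R(A,a)=\{v\in S^{d-1}: A\cap B(a+Rv)=\emptyset\}$ (the unit vectors $R$-supporting $A$ at $a$). A body $A$ is $R$-supported if $\mathcal{N}_R(A,a)\neq\emptyset$ for every $a\in\partial A$. *)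

theory Defs
  imports "HOL-Analysis.Analysis"
begin

definition body :: "'a::euclidean_space set \<Rightarrow> bool" where
  "body E \<longleftrightarrow> E \<noteq> {} \<and> closed E"

definition nbhd_R :: "real \<Rightarrow> 'a::euclidean_space set \<Rightarrow> 'a set" where
  "nbhd_R R E = {x. infdist x E < R}"

definition co_R :: "real \<Rightarrow> 'a::euclidean_space set \<Rightarrow> 'a set" where
  "co_R R E = \<Inter> {UNIV - ball c R | c. ball c R \<inter> E = {}}"

definition normals_R :: "real \<Rightarrow> 'a::euclidean_space set \<Rightarrow> 'a \<Rightarrow> 'a set" where
  "normals_R R A a = {v. norm v = 1 \<and> A \<inter> ball (a + R *\<^sub>R v) R = {}}"

definition R_supported :: "real \<Rightarrow> 'a::euclidean_space set \<Rightarrow> bool" where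
  "R_supported R A \<longleftrightarrow> body A \<and> (\<forall>a\<in>frontier A. normals_R R A a \<noteq> {})"

end

theory Submission
  imports Defs
begin

lemma mem_co: "x \<in> co_R R E \<longleftrightarrow> (\<forall>c. ball c R \<inter> E = {} \<longrightarrow> x \<notin> ball c R)"
proof
  assume x: "x \<in> co_R R E"
  show "\<forall>c. ball c R \<inter> E = {} \<longrightarrow> x \<notin> ball c R"
  proof (intro allI impI)
    fix c assume "ball c R \<inter> E = {}"
    then have "UNIV - ball c R \<in> {UNIV - ball c R | c. ball c R \<inter> E = {}}" by blast
    then show "x \<notin> ball c R" using x unfolding co_R_def by blast
  qed
next
  assume "\<forall>c. ball c R \<inter> E = {} \<longrightarrow> x \<notin> ball c R"
  then show "x \<in> co_R R E" unfolding co_R_def by auto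
qed

lemma E_sub_co: "E \<subseteq> co_R R E"
  unfolding mem_co subset_eq by blast

lemma ball_miss_iff:
  fixes E :: "'a::euclidean_space set"
  assumes "closed E" "E \<noteq> {}"
  shows "ball c R \<inter> E = {} \<longleftrightarrow> R \<le> infdist c E"
proof
  assume h: "ball c R \<inter> E = {}"
  obtain a where "a \<in> E" "infdist c E = dist c a"
    using infdist_attains_inf[OF assms] by blast
  with h show "R \<le> infdist c E" by (metis IntI empty_iff mem_ball not_less)
next
  assume h: "R \<le> infdist c E"
  show "ball c R \<inter> E = {}"
  proof (rule equals0I)
    fix y assume "y \<in> ball c R \<inter> E"
    then have "dist c y < R" "y \<in> E" by auto
    with infdist_le[of y E c] h show False by linarith
  qed
qed

theorem mainTheorem2:
  fixes E :: "'a::euclidean_space set" and R :: real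
  assumes "R > 0" and "R_supported R E"
  shows "frontier E \<subseteq> frontier (co_R R E) \<and>
         interior E \<subseteq> interior (co_R R E) \<and>
         (\<forall>a\<in>frontier E. normals_R R E a = normals_R R (co_R R E) a) \<and>
         co_R R E = nbhd_R R E \<inter>
           \<Inter> {UNIV - ball (a + R *\<^sub>R \<theta>) R | a \<theta>. a \<in> frontier E \<and> \<theta> \<in> normals_R R E a}"
proof -
  have cl: "closed E" and ne: "E \<noteq> {}" and sup: "\<forall>a\<in>frontier E. normals_R R E a \<noteq> {}"
    using assms(2) unfolding R_supported_def body_def by auto
  have clco: "closed (co_R R E)"
    unfolding co_R_def by (intro closed_Inter) auto
  have EA: "E \<subseteq> co_R R E" by (rule E_sub_co)
  have P1: "frontier E \<subseteq> frontier (co_R R E)"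
  proof
    fix a assume a: "a \<in> frontier E"
    then have aE: "a \<in> E" using cl frontier_subset_closed by blast
    obtain v where v: "v \<in> normals_R R E a" using sup a by blast
    then have nv: "norm v = 1" and bm: "E \<inter> ball (a + R *\<^sub>R v) R = {}"
      unfolding normals_R_def by auto
    have bm': "ball (a + R *\<^sub>R v) R \<inter> E = {}" using bm by (simp add: Int_commute)
    have sub: "ball (a + R *\<^sub>R v) R \<subseteq> - co_R R E"
    proof
      fix y assume "y \<in> ball (a + R *\<^sub>R v) R"
      then show "y \<in> - co_R R E" using bm' mem_co[of y R E] by auto
    qed
    have "closure (ball (a + R *\<^sub>R v) R) \<subseteq> closure (- co_R R E)"
      by (rule closure_mono[OF sub])
    then have cs: "cball (a + R *\<^sub>R v) R \<subseteq> - interior (co_R R E)"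
      using assms(1) by (simp add: closure_complement)
    have "dist (a + R *\<^sub>R v) a = R"
      using nv assms(1) by (simp add: dist_norm)
    then have "a \<in> cball (a + R *\<^sub>R v) R" by simp
    with cs have ni: "a \<notin> interior (co_R R E)" by auto
    have "a \<in> closure (co_R R E)" using aE EA closure_subset by blast
    with ni show "a \<in> frontier (co_R R E)" unfolding frontier_def by blast
  qed
  have P2: "interior E \<subseteq> interior (co_R R E)" using EA interior_mono by blast
  have P3: "\<forall>a\<in>frontier E. normals_R R E a = normals_R R (co_R R E) a"
  proof (intro ballI set_eqI iffI)
    fix a v assume "v \<in> normals_R R E a"
    then have nv: "norm v = 1" and bm: "ball (a + R *\<^sub>R v) R \<inter> E = {}"
      unfolding normals_R_def by (auto simp: Int_commute)
    have "co_R R E \<inter> ball (a + R *\<^sub>R v) R = {}"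
    proof (rule equals0I)
      fix y assume "y \<in> co_R R E \<inter> ball (a + R *\<^sub>R v) R"
      then have "y \<in> co_R R E" "y \<in> ball (a + R *\<^sub>R v) R" by auto
      with bm mem_co[of y R E] show False by blast
    qed
    with nv show "v \<in> normals_R R (co_R R E) a"
      unfolding normals_R_def by simp
  next
    fix a v assume "v \<in> normals_R R (co_R R E) a"
    then have nv: "norm v = 1" and bm: "co_R R E \<inter> ball (a + R *\<^sub>R v) R = {}"
      unfolding normals_R_def by auto
    have "E \<inter> ball (a + R *\<^sub>R v) R = {}" using bm EA by auto
    with nv show "v \<in> normals_R R E a"
      unfolding normals_R_def by simp
  qed
  have P4a: "co_R R E \<subseteq> nbhd_R R E"
  proof
    fix x assume x: "x \<in> co_R R E"
    show "x \<in> nbhd_R R E"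
    proof (rule ccontr)
      assume "x \<notin> nbhd_R R E"
      then have "R \<le> infdist x E" by (simp add: nbhd_R_def not_less)
      then have b: "ball x R \<inter> E = {}" using ball_miss_iff[OF cl ne, of x R] by simp
      have xb: "x \<in> ball x R" using assms(1) by simp
      have H: "\<forall>c. ball c R \<inter> E = {} \<longrightarrow> x \<notin> ball c R" using x by (simp only: mem_co)
      from H b xb show False by blast
    qed
  qed
  have P4b: "co_R R E \<subseteq> \<Inter> {UNIV - ball (a + R *\<^sub>R \<theta>) R | a \<theta>. a \<in> frontier E \<and> \<theta> \<in> normals_R R E a}"
  proof
    fix x assume x: "x \<in> co_R R E"
    show "x \<in> \<Inter> {UNIV - ball (a + R *\<^sub>R \<theta>) R | a \<theta>. a \<in> frontier E \<and> \<theta> \<in> normals_R R E a}"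
    proof (rule InterI)
      fix S assume "S \<in> {UNIV - ball (a + R *\<^sub>R \<theta>) R | a \<theta>. a \<in> frontier E \<and> \<theta> \<in> normals_R R E a}"
      then obtain a \<theta> where S: "S = UNIV - ball (a + R *\<^sub>R \<theta>) R" and th: "\<theta> \<in> normals_R R E a" by blast
      from th have "ball (a + R *\<^sub>R \<theta>) R \<inter> E = {}" unfolding normals_R_def by (simp add: Int_commute)
      then have "x \<notin> ball (a + R *\<^sub>R \<theta>) R" using x mem_co[of x R E] by blast
      then show "x \<in> S" using S by simp
    qed
  qed
  have P4c: "nbhd_R R E \<inter> \<Inter> {UNIV - ball (a + R *\<^sub>R \<theta>) R | a \<theta>. a \<in> frontier E \<and> \<theta> \<in> normals_R R E a} \<subseteq> co_R R E"
  proof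
    fix x assume xin: "x \<in> nbhd_R R E \<inter> \<Inter> {UNIV - ball (a + R *\<^sub>R \<theta>) R | a \<theta>. a \<in> frontier E \<and> \<theta> \<in> normals_R R E a}"
    then have xR: "infdist x E < R" unfolding nbhd_R_def by auto
    have H: "\<And>a \<theta>. a \<in> frontier E \<Longrightarrow> \<theta> \<in> normals_R R E a \<Longrightarrow> x \<notin> ball (a + R *\<^sub>R \<theta>) R"
      using xin by blast
    show "x \<in> co_R R E"
      unfolding mem_co
    proof (intro allI impI notI)
      fix c assume bc: "ball c R \<inter> E = {}" and xc: "x \<in> ball c R"
      obtain e where eE: "e \<in> E" and ed: "infdist x E = dist x e"
        using infdist_attains_inf[OF cl ne] by blast
      have xe: "e \<in> ball x R" using xR ed by simp
      have cx: "c \<in> ball x R" using xc by (simp add: dist_commute)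
      define g where "g t = (1 - t) *\<^sub>R c + t *\<^sub>R e" for t :: real
      define f where "f t = infdist (g t) E" for t
      have cont: "continuous_on {0..1} f"
        unfolding f_def g_def by (intro continuous_intros)
      have f0: "R \<le> f 0" using bc ball_miss_iff[OF cl ne] by (simp add: f_def g_def)
      have f1: "f 1 \<le> R" using eE assms(1) by (simp add: f_def g_def)
      obtain t where t: "0 \<le> t" "t \<le> 1" "f t = R"
        using IVT2'[of f 1 R 0, OF f1 f0 _ cont] by auto
      define c' where "c' = g t"
      have gin: "c' \<in> ball x R"
        using convex_ball[of x R] cx xe t unfolding convex_def c'_def g_def by auto
      obtain a where aE: "a \<in> E" and ad: "infdist c' E = dist c' a"
        using infdist_attains_inf[OF cl ne] by blast
      have dca: "dist c' a = R" using ad t(3) by (simp add: f_def c'_def)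
      have bm: "ball c' R \<inter> E = {}"
        using ball_miss_iff[OF cl ne] t(3) by (simp add: f_def c'_def)
      define \<theta> where "\<theta> = (1 / R) *\<^sub>R (c' - a)"
      have ct: "a + R *\<^sub>R \<theta> = c'" using assms(1) by (simp add: \<theta>_def)
      have nt: "norm \<theta> = 1" using dca assms(1)
        by (simp add: \<theta>_def dist_norm norm_minus_commute)
      have thn: "\<theta> \<in> normals_R R E a"
        unfolding normals_R_def using nt bm ct by auto
      have "ball c' R \<subseteq> - E" using bm by blast
      then have "closure (ball c' R) \<subseteq> - interior E"
        using closure_mono closure_complement by metis
      moreover have "a \<in> cball c' R" using dca by simp
      ultimately have "a \<notin> interior E" using assms(1) by auto
      then have "a \<in> frontier E" using aE cl by (simp add: frontier_def closure_closed)
      from H[OF this thn] gin ct show False by (simp add: dist_commute)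
    qed
  qed
  show ?thesis using P1 P2 P3 P4a P4b P4c by blast
qed

end
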